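(* Consider the $k$-agent prophet game with random tie-breaking. For every $\ell\in\{1,\ldots,n\}$, let $$T^\ell=\frac{1}{k+\ell}\sum_{j=1}^{\ell}\mathbb{E}[y_j].$$ Then for every agent $i$, the single threshold strategy $T^\ell$ guarantees agent $i$ an expected utility of at least $T^\ell$; that is, for every strategy profile $S_{-i}$ of the other agents, $u_i(T^\ell,S_{-i})\ge T^\ell$.
   Context: Prophet game with competing agents: there are $n$ rewards $v_1,\ldots,v_n$, where $v_t$ is a non-negative real random variable drawn from a known distribution $F_t$ (with finite mean), independently across $t$. There are $k$ agents. At each time $t=1,\ldots,n$, the value $v_t$ is revealed to all agents, and every active agent (an agent who has not yet received a reward) decides whether to select $v_t$. If exactly one agent selects $v_t$, it is assigned to that agent. If several agents select it, it is assigned to one of them by the tie-breaking rule. Under random tie-breaking, the reward goes to a uniformly random agent among those selecting it. An agent who receives a reward becomes inactive, and unselected rewards are lost forever. A strategy of an agent is a (possibly randomized) rule that, for each $t$, decides whether to select $v_t$ based on $t$, the realized value $v_t$, and the set of currently active agents. The utility $u_i(S)$ of agent $i$ under strategy profile $S=(S_1,\ldots,S_k)=(S_i,S_{-i})$ is her expected received reward (zero if she receives none). A strategy $S_i$ guarantees agent $i$ utility $\alpha$ if $u_i(S_i,S_{-i})\ge\alpha$ for every $S_{-i}$. The single threshold strategy $T$ selects $v_t$ if and only if the agent is still active and $v_t\ge T$. For $j=1,\ldots,n$, $y_j$ denotes the $j$-th largest value among $v_1,\ldots,v_n$. *)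

theory Defs
  imports "HOL-Probability.Probability"
begin

text \<open>Times are indexed 0,...,n-1 (time t of the paper is index t-1); agents are
0,...,k-1. A (behavioural) strategy profile is
sigma :: agent => time => value => active set => real, giving the probability that
the agent selects the current value; selection decisions of the agents are
independent at each step.\<close>

type_synonym profile = "nat \<Rightarrow> nat \<Rightarrow> real \<Rightarrow> nat set \<Rightarrow> real"

definition sel_prob :: "profile \<Rightarrow> nat \<Rightarrow> real \<Rightarrow> nat set \<Rightarrow> nat set \<Rightarrow> real" where
  "sel_prob \<sigma> t v A S =
     (\<Prod>j\<in>S. \<sigma> j t v A) * (\<Prod>j\<in>A - S. 1 - \<sigma> j t v A)"

text \<open>util F sigma i t r A: expected reward agent i receives from rounds t, ..., t+r-1
when the set of active agents at the start of round t is A (random tie-breaking).\<close>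

fun util :: "(nat \<Rightarrow> real measure) \<Rightarrow> profile \<Rightarrow> nat \<Rightarrow> nat \<Rightarrow> nat \<Rightarrow> nat set \<Rightarrow> real" where
  "util F \<sigma> i t 0 A = 0"
| "util F \<sigma> i t (Suc r) A =
     (\<integral>v. (\<Sum>S\<in>Pow A. sel_prob \<sigma> t v A S *
            (if S = {} then util F \<sigma> i (Suc t) r A
             else (\<Sum>w\<in>S. if w = i then v else util F \<sigma> i (Suc t) r (A - {w})) / real (card S)))
       \<partial>F t)"

definition utility :: "(nat \<Rightarrow> real measure) \<Rightarrow> nat \<Rightarrow> nat \<Rightarrow> profile \<Rightarrow> nat \<Rightarrow> real" where
  "utility F n k \<sigma> i = util F \<sigma> i 0 n {0..<k}"

definition threshold_strategy :: "real \<Rightarrow> nat \<Rightarrow> real \<Rightarrow> nat set \<Rightarrow> real" where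
  "threshold_strategy T = (\<lambda>t v A. if T \<le> v then 1 else 0)"

text \<open>y_j: the j-th largest of v_0,...,v_(n-1) (1 <= j <= n).\<close>

definition kth_largest :: "nat \<Rightarrow> (nat \<Rightarrow> real) \<Rightarrow> nat \<Rightarrow> real" where
  "kth_largest n v j = rev (sort (map v [0..<n])) ! (j - 1)"

definition expected_y :: "(nat \<Rightarrow> real measure) \<Rightarrow> nat \<Rightarrow> nat \<Rightarrow> real" where
  "expected_y F n j = (\<integral>v. kth_largest n v j \<partial>(PiM {..<n} F))"

definition thr :: "(nat \<Rightarrow> real measure) \<Rightarrow> nat \<Rightarrow> nat \<Rightarrow> nat \<Rightarrow> real" where
  "thr F n k l = (\<Sum>j=1..l. expected_y F n j) / real (k + l)"

end

theory Submission
  imports Defs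
begin

lemma sel_sum:
  assumes "finite A"
  shows "(\<Sum>S\<in>Pow A. sel_prob p t v A S) = 1"
proof -
  have "(\<Prod>j\<in>A. p j t v A + (1 - p j t v A)) = (\<Sum>S\<in>Pow A. sel_prob p t v A S)"
    unfolding sel_prob_def by (rule prod_add[OF assms])
  then show ?thesis by simp
qed

lemma sel_nonneg:
  assumes "\<forall>j. 0 \<le> p j t v A \<and> p j t v A \<le> 1"
  shows "0 \<le> sel_prob p t v A S"
  unfolding sel_prob_def using assms
  by (intro mult_nonneg_nonneg prod_nonneg) auto

lemma avg_bound:
  fixes m v T :: real
  assumes "m \<le> T" "T \<le> v" "1 \<le> cs" "cs \<le> k" "v + (cs - 1) * m \<le> X * cs"
  shows "m + (v - T) / k \<le> X"
proof -
  have k0: "k > 0" using assms by linarith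
  have "m + (v - T) / k \<le> m + (v - m) / k" using k0 assms by (simp add: divide_right_mono)
  also have "\<dots> \<le> m + (v - m) / cs" using assms by (intro add_left_mono divide_left_mono) auto
  also have "\<dots> = (v + (cs - 1) * m) / cs" using assms by (simp add: field_simps)
  also have "\<dots> \<le> X" using assms by (simp add: divide_le_eq)
  finally show ?thesis .
qed

lemma pointwise:
  fixes c :: "nat set \<Rightarrow> real" and p :: profile
  assumes fin: "finite A" and iA: "i \<in> A" and cA: "card A \<le> k" and mT: "m \<le> T"
    and cm: "\<And>B. i \<in> B \<Longrightarrow> B \<subseteq> A \<Longrightarrow> m \<le> c B"
    and pb: "\<forall>j. 0 \<le> p j t v A \<and> p j t v A \<le> 1"
    and pi: "p i t v A = (if T \<le> v then 1 else 0)"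
  shows "m + max (v - T) 0 / real k \<le> (\<Sum>S\<in>Pow A. sel_prob p t v A S *
            (if S = {} then c A
             else (\<Sum>w\<in>S. if w = i then v else c (A - {w})) / real (card S)))"
proof -
  let ?g = "m + max (v - T) 0 / real k"
  have "?g = (\<Sum>S\<in>Pow A. sel_prob p t v A S * ?g)"
    by (simp add: sum_distrib_right[symmetric] sel_sum[OF fin])
  also have "\<dots> \<le> (\<Sum>S\<in>Pow A. sel_prob p t v A S *
            (if S = {} then c A
             else (\<Sum>w\<in>S. if w = i then v else c (A - {w})) / real (card S)))"
  proof (rule sum_mono)
    fix S assume S: "S \<in> Pow A"
    have sn: "0 \<le> sel_prob p t v A S" using sel_nonneg[of p t v A S] pb by blast
    have finS: "finite S" using S fin by (auto intro: finite_subset)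
    have cS: "card S \<le> k" using S fin cA card_mono by (meson PowD le_trans)
    show "sel_prob p t v A S * ?g \<le> sel_prob p t v A S *
            (if S = {} then c A
             else (\<Sum>w\<in>S. if w = i then v else c (A - {w})) / real (card S))"
    proof (cases "T \<le> v")
      case True
      show ?thesis
      proof (cases "i \<in> S")
        case False
        then have "i \<in> A - S" using iA by auto
        then have "sel_prob p t v A S = 0" unfolding sel_prob_def
          using True pi fin by (auto intro!: prod_zero)
        then show ?thesis by simp
      next
        case iS: True
        have ne: "S \<noteq> {}" using iS by auto
        have c1: "1 \<le> card S" using iS finS by (metis card_0_eq ne less_one not_less)
        have eq: "(\<Sum>w\<in>S. if w = i then v else c (A - {w})) = v + (\<Sum>w\<in>S - {i}. c (A - {w}))"
          using sum.remove[OF finS iS, of "\<lambda>w. if w = i then v else c (A - {w})"] by simp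
        have "real (card (S - {i})) * m \<le> (\<Sum>w\<in>S - {i}. c (A - {w}))"
          by (rule sum_bounded_below) (use iA S in \<open>auto intro!: cm\<close>)
        moreover have "real (card (S - {i})) = real (card S) - 1" using iS finS c1 by auto
        ultimately have "v + (real (card S) - 1) * m \<le> ((\<Sum>w\<in>S. if w = i then v else c (A - {w})) / real (card S)) * real (card S)"
          using eq c1 by simp
        then have "m + (v - T) / k \<le> (\<Sum>w\<in>S. if w = i then v else c (A - {w})) / real (card S)"
          using avg_bound[OF mT True, of "real (card S)" "real k"] c1 cS by simp
        then show ?thesis using sn True ne by (intro mult_left_mono) auto
      qed
    next
      case False
      show ?thesis
      proof (cases "i \<in> S")
        case True
        then have "sel_prob p t v A S = 0" unfolding sel_prob_def
          using False pi finS by (auto intro!: prod_zero)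
        then show ?thesis by simp
      next
        case iS: False
        have "m \<le> (if S = {} then c A
             else (\<Sum>w\<in>S. if w = i then v else c (A - {w})) / real (card S))"
        proof (cases "S = {}")
          case True then show ?thesis using cm iA by auto
        next
          case ne: False
          have c1: "1 \<le> card S" using finS ne by (metis card_0_eq less_one not_less)
          have "(\<Sum>w\<in>S. if w = i then v else c (A - {w})) = (\<Sum>w\<in>S. c (A - {w}))"
            using iS by (intro sum.cong) auto
          moreover have "real (card S) * m \<le> (\<Sum>w\<in>S. c (A - {w}))"
            by (rule sum_bounded_below) (use iA S iS in \<open>auto intro!: cm\<close>)
          ultimately show ?thesis using ne c1 by (simp add: le_divide_eq mult.commute)
        qed
        then show ?thesis using sn False by (intro mult_left_mono) auto
      qed
    qed
  qed
  finally show ?thesis .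
qed

lemma main_ind:
  fixes F :: "nat \<Rightarrow> real measure" and \<sigma> :: profile and T :: real
  assumes prob: "\<forall>t<n. prob_space (F t)"
    and sets: "\<forall>t<n. sets (F t) = sets borel"
    and int: "\<forall>t<n. integrable (F t) (\<lambda>v. v)"
    and k1: "1 \<le> k"
    and sb: "\<forall>j t v A. 0 \<le> \<sigma> j t v A \<and> \<sigma> j t v A \<le> 1"
    and sm: "\<forall>j t A. (\<lambda>v. \<sigma> j t v A) \<in> borel_measurable borel"
  shows "t + r \<le> n \<Longrightarrow> finite A \<Longrightarrow> i \<in> A \<Longrightarrow> card A \<le> k \<Longrightarrow>
    min T ((\<Sum>s\<in>{t..<t+r}. \<integral>v. max (v - T) 0 \<partial>F s) / real k)
      \<le> util F (\<sigma>(i := threshold_strategy T)) i t r A"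
proof (induction r arbitrary: t A)
  case 0
  then show ?case by simp
next
  case (Suc r)
  define \<sigma>' where "\<sigma>' = \<sigma>(i := threshold_strategy T)"
  define R' where "R' = (\<Sum>s\<in>{Suc t..<Suc t+r}. \<integral>v. max (v - T) 0 \<partial>F s)"
  define m where "m = min T (R' / real k)"
  define a where "a = (\<integral>v. max (v - T) 0 \<partial>F t)"
  define f where "f = (\<lambda>v. (\<Sum>S\<in>Pow A. sel_prob \<sigma>' t v A S *
            (if S = {} then util F \<sigma>' i (Suc t) r A
             else (\<Sum>w\<in>S. if w = i then v else util F \<sigma>' i (Suc t) r (A - {w})) / real (card S))))"
  have tn: "t < n" using Suc.prems by simp
  interpret P: prob_space "F t" using prob tn by simp
  have st: "sets (F t) = sets borel" using sets tn by simp
  have intv: "integrable (F t) (\<lambda>v. v)" using int tn by simp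
  have IH: "m \<le> util F \<sigma>' i (Suc t) r B" if "i \<in> B" "B \<subseteq> A" for B
  proof -
    have "finite B" using that Suc.prems finite_subset by blast
    moreover have "card B \<le> k" using that Suc.prems card_mono le_trans by blast
    ultimately have "min T (R' / real k) \<le> util F \<sigma>' i (Suc t) r B"
      unfolding R'_def \<sigma>'_def using Suc.prems that by (intro Suc.IH) auto
    then show ?thesis unfolding m_def .
  qed
  have pb: "\<forall>j. 0 \<le> \<sigma>' j t v A \<and> \<sigma>' j t v A \<le> 1" for v
    using sb by (simp add: \<sigma>'_def threshold_strategy_def)
  have pi: "\<sigma>' i t v A = (if T \<le> v then 1 else 0)" for v
    by (simp add: \<sigma>'_def threshold_strategy_def)
  have pw: "m + max (v - T) 0 / real k \<le> f v" for v
    unfolding f_def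
    apply (rule pointwise[where c="\<lambda>B. util F \<sigma>' i (Suc t) r B" and m=m and T=T and p=\<sigma>'])
    using Suc.prems IH pb[of v] pi[of v] by (auto simp: m_def)
  have meas\<sigma>: "(\<lambda>v. \<sigma>' j t v A) \<in> borel_measurable (F t)" for j
  proof (cases "j = i")
    case True
    have "(\<lambda>v::real. if T \<le> v then 1 else (0::real)) \<in> borel_measurable (F t)"
      by (subst measurable_cong_sets[OF st refl]) measurable
    then show ?thesis using True by (simp add: \<sigma>'_def threshold_strategy_def)
  next
    case False
    then show ?thesis using sm by (subst measurable_cong_sets[OF st refl]) (simp add: \<sigma>'_def)
  qed
  have meassel: "(\<lambda>v. sel_prob \<sigma>' t v A S) \<in> borel_measurable (F t)" for S
    unfolding sel_prob_def using meas\<sigma> by measurable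
  have intX: "integrable (F t) (\<lambda>v. if S = {} then util F \<sigma>' i (Suc t) r A
             else (\<Sum>w\<in>S. if w = i then v else util F \<sigma>' i (Suc t) r (A - {w})) / real (card S))" for S
  proof (cases "S = {}")
    case True then show ?thesis by simp
  next
    case False
    have "integrable (F t) (\<lambda>v. if w = i then v else util F \<sigma>' i (Suc t) r (A - {w}))" for w
      using intv by (cases "w = i") auto
    then show ?thesis using False by (auto intro!: Bochner_Integration.integrable_sum)
  qed
  have intf: "integrable (F t) f"
    unfolding f_def
  proof (rule Bochner_Integration.integrable_sum[where f="\<lambda>S v. sel_prob \<sigma>' t v A S * (if S = {} then util F \<sigma>' i (Suc t) r A
             else (\<Sum>w\<in>S. if w = i then v else util F \<sigma>' i (Suc t) r (A - {w})) / real (card S))"])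
    fix S assume S: "S \<in> Pow A"
    show "integrable (F t) (\<lambda>v. sel_prob \<sigma>' t v A S * (if S = {} then util F \<sigma>' i (Suc t) r A
             else (\<Sum>w\<in>S. if w = i then v else util F \<sigma>' i (Suc t) r (A - {w})) / real (card S)))"
    proof (rule Bochner_Integration.integrable_bound[OF intX[of S]])
      show "(\<lambda>v. sel_prob \<sigma>' t v A S * (if S = {} then util F \<sigma>' i (Suc t) r A
             else (\<Sum>w\<in>S. if w = i then v else util F \<sigma>' i (Suc t) r (A - {w})) / real (card S)))
            \<in> borel_measurable (F t)"
        using meassel borel_measurable_integrable[OF intX[of S]] by measurable
      show "AE v in F t. norm (sel_prob \<sigma>' t v A S * (if S = {} then util F \<sigma>' i (Suc t) r A
             else (\<Sum>w\<in>S. if w = i then v else util F \<sigma>' i (Suc t) r (A - {w})) / real (card S)))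
           \<le> norm (if S = {} then util F \<sigma>' i (Suc t) r A
             else (\<Sum>w\<in>S. if w = i then v else util F \<sigma>' i (Suc t) r (A - {w})) / real (card S))"
      proof (rule AE_I2)
        fix v
        have "0 \<le> sel_prob \<sigma>' t v A S" "sel_prob \<sigma>' t v A S \<le> 1"
        proof -
          show "0 \<le> sel_prob \<sigma>' t v A S" using sel_nonneg[of \<sigma>' t v A S] pb by blast
          have "(\<Sum>S'\<in>{S}. sel_prob \<sigma>' t v A S') \<le> (\<Sum>S'\<in>Pow A. sel_prob \<sigma>' t v A S')"
            using S Suc.prems(2) sel_nonneg[of \<sigma>' t v A] pb by (intro sum_mono2) auto
          then show "sel_prob \<sigma>' t v A S \<le> 1" using sel_sum[OF Suc.prems(2)] by simp
        qed
        then show "norm (sel_prob \<sigma>' t v A S * (if S = {} then util F \<sigma>' i (Suc t) r A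
             else (\<Sum>w\<in>S. if w = i then v else util F \<sigma>' i (Suc t) r (A - {w})) / real (card S)))
           \<le> norm (if S = {} then util F \<sigma>' i (Suc t) r A
             else (\<Sum>w\<in>S. if w = i then v else util F \<sigma>' i (Suc t) r (A - {w})) / real (card S))"
          by (simp add: abs_mult mult_left_le_one_le)
      qed
    qed
  qed
  have inth: "integrable (F t) (\<lambda>v. max (v - T) 0)"
    using intv by auto
  have intg: "integrable (F t) (\<lambda>v. m + max (v - T) 0 / real k)"
    using inth by auto
  have "(\<integral>v. m + max (v - T) 0 / real k \<partial>F t) \<le> (\<integral>v. f v \<partial>F t)"
    by (rule integral_mono[OF intg intf]) (use pw in auto)
  moreover have "(\<integral>v. m + max (v - T) 0 / real k \<partial>F t) = m + a / real k"
    using inth by (simp add: a_def P.prob_space)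
  moreover have "util F \<sigma>' i t (Suc r) A = (\<integral>v. f v \<partial>F t)"
    by (simp add: f_def)
  moreover have a0: "0 \<le> a" unfolding a_def by (rule Bochner_Integration.integral_nonneg) auto
  moreover have "(\<Sum>s\<in>{t..<t+Suc r}. \<integral>v. max (v - T) 0 \<partial>F s) = a + R'"
    unfolding a_def R'_def by (simp add: sum.atLeast_Suc_lessThan)
  moreover have "min T ((a + R') / real k) \<le> m + a / real k"
  proof -
    have "0 \<le> a / real k" using a0 by simp
    then show ?thesis unfolding m_def add_divide_distrib by (simp add: min_def)
  qed
  ultimately have "min T ((\<Sum>s\<in>{t..<t+Suc r}. \<integral>v. max (v - T) 0 \<partial>F s) / real k) \<le> util F \<sigma>' i t (Suc r) A"
    by (metis order_trans)
  then show ?case unfolding \<sigma>'_def .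
qed

lemma kth_sum:
  fixes h :: "real \<Rightarrow> real"
  shows "(\<Sum>j\<in>{1..n}. h (kth_largest n v j)) = (\<Sum>s<n. h (v s))"
proof -
  define ys where "ys = rev (sort (map v [0..<n]))"
  have len: "length ys = n" by (simp add: ys_def)
  have "(\<Sum>j\<in>{1..n}. h (kth_largest n v j)) = (\<Sum>j\<in>Suc ` {..<n}. h (ys ! (j - 1)))"
    by (simp add: kth_largest_def ys_def image_Suc_lessThan)
  also have "\<dots> = (\<Sum>i<n. h (ys ! i))"
    by (subst sum.reindex) auto
  also have "\<dots> = sum_list (map h ys)"
    using len by (simp add: sum_list_sum_nth atLeast0LessThan)
  also have "\<dots> = sum_list (map h (sort (map v [0..<n])))"
    by (simp add: ys_def rev_map[symmetric])
  also have "\<dots> = sum_mset (image_mset h (mset (sort (map v [0..<n]))))"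
    by (metis mset_map sum_mset_sum_list)
  also have "\<dots> = sum_list (map h (map v [0..<n]))"
    by (metis mset_map mset_sort sum_mset_sum_list)
  also have "\<dots> = (\<Sum>s<n. h (v s))"
    by (simp add: sum_list_map_eq_sum_count sum.list_conv_set_nth atLeast0LessThan[symmetric] sum_set_upt_conv_sum_list_nat[symmetric])
  finally show ?thesis .
qed

lemma kth_bound:
  assumes "J \<subseteq> {1..l}" "l \<le> n"
  shows "(\<Sum>j\<in>J. kth_largest n v j) \<le> (\<Sum>s<n. max (v s - T) 0) + real (card J) * T"
proof -
  have fJ: "finite J" using assms finite_subset by blast
  have "(\<Sum>j\<in>J. kth_largest n v j) = (\<Sum>j\<in>J. kth_largest n v j - T) + real (card J) * T"
    by (simp add: sum_subtractf)
  also have "(\<Sum>j\<in>J. kth_largest n v j - T) \<le> (\<Sum>j\<in>J. max (kth_largest n v j - T) 0)"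
    by (intro sum_mono) auto
  also have "\<dots> \<le> (\<Sum>j\<in>{1..n}. max (kth_largest n v j - T) 0)"
    using assms by (intro sum_mono2) auto
  also have "\<dots> = (\<Sum>s<n. max (v s - T) 0)"
    by (rule kth_sum)
  finally show ?thesis by simp
qed

theorem theorem1:
  fixes F :: "nat \<Rightarrow> real measure" and n k i l :: nat and \<sigma> :: profile
  assumes "\<forall>t<n. prob_space (F t)"
    and "\<forall>t<n. sets (F t) = sets borel"
    and "\<forall>t<n. AE v in F t. 0 \<le> v"
    and "\<forall>t<n. integrable (F t) (\<lambda>v. v)"
    and "i < k"
    and "1 \<le> l" and "l \<le> n"
    and "\<forall>j t v A. 0 \<le> \<sigma> j t v A \<and> \<sigma> j t v A \<le> 1"
    and "\<forall>j t A. (\<lambda>v. \<sigma> j t v A) \<in> borel_measurable borel"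
  shows "utility F n k (\<sigma>(i := threshold_strategy (thr F n k l))) i \<ge> thr F n k l"
proof -
  define T where "T = thr F n k l"
  define PM where "PM = PiM {..<n} F"
  define a where "a = (\<lambda>s. \<integral>v. max (v - T) 0 \<partial>F s)"
  define R where "R = (\<Sum>s<n. a s)"
  define J where "J = {j\<in>{1..l}. integrable PM (\<lambda>v. kth_largest n v j)}"
  have k1: "1 \<le> k" using assms(5) by simp
  interpret PM: prob_space PM unfolding PM_def
    by (rule prob_space_PiM) (use assms(1) in auto)
  have comp: "(\<integral>\<omega>. max (\<omega> s - T) 0 \<partial>PM) = a s" and
       compi: "integrable PM (\<lambda>\<omega>. max (\<omega> s - T) 0)" if s: "s < n" for s
  proof -
    have d: "distr PM (F s) (\<lambda>\<omega>. \<omega> s) = F s" unfolding PM_def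
      by (rule distr_PiM_component) (use assms(1) s in auto)
    have mc: "(\<lambda>\<omega>. \<omega> s) \<in> measurable PM (F s)" unfolding PM_def
      using s by (auto intro!: measurable_component_singleton)
    have mh: "(\<lambda>v. max (v - T) 0) \<in> borel_measurable (F s)"
      using assms(2) s by (subst measurable_cong_sets[of _ borel]) auto
    interpret Fs: prob_space "F s" using assms(1) s by simp
    have "integrable (F s) (\<lambda>v. v)" using assms(4) s by simp
    then have ih: "integrable (F s) (\<lambda>v. max (v - T) 0)" by auto
    show "(\<integral>\<omega>. max (\<omega> s - T) 0 \<partial>PM) = a s"
      unfolding a_def using integral_distr[OF mc mh] d by simp
    show "integrable PM (\<lambda>\<omega>. max (\<omega> s - T) 0)"
      using integrable_distr_eq[OF mc mh] d ih by simp
  qed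
  have fJ: "finite J" unfolding J_def by simp
  have JS: "J \<subseteq> {1..l}" unfolding J_def by auto
  have "T * real (k + l) = (\<Sum>j=1..l. expected_y F n j)"
    using assms(6) by (simp add: T_def thr_def)
  also have "\<dots> = (\<Sum>j\<in>J. expected_y F n j)"
  proof -
    have z: "\<forall>j\<in>{1..l} - J. expected_y F n j = 0"
    proof
      fix j assume "j \<in> {1..l} - J"
      then have "\<not> integrable PM (\<lambda>v. kth_largest n v j)" unfolding J_def by auto
      then show "expected_y F n j = 0" unfolding expected_y_def PM_def[symmetric]
        by (rule not_integrable_integral_eq)
    qed
    show ?thesis using sum.mono_neutral_right[OF _ JS z] by simp
  qed
  also have "\<dots> = (\<integral>v. (\<Sum>j\<in>J. kth_largest n v j) \<partial>PM)"
    by (subst Bochner_Integration.integral_sum) (auto simp: J_def expected_y_def PM_def)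
  also have "\<dots> \<le> (\<integral>v. (\<Sum>s<n. max (v s - T) 0) + real (card J) * T \<partial>PM)"
    by (rule integral_mono) (auto simp: J_def compi intro!: Bochner_Integration.integrable_sum kth_bound[OF _ assms(7)])
  also have "\<dots> = R + real (card J) * T"
  proof -
    have i1: "integrable PM (\<lambda>v. \<Sum>s<n. max (v s - T) 0)"
      by (rule Bochner_Integration.integrable_sum) (simp add: compi)
    have "(\<integral>v. (\<Sum>s<n. max (v s - T) 0) + real (card J) * T \<partial>PM)
        = (\<integral>v. (\<Sum>s<n. max (v s - T) 0) \<partial>PM) + real (card J) * T"
      using i1 by (simp add: PM.prob_space)
    also have "(\<integral>v. (\<Sum>s<n. max (v s - T) 0) \<partial>PM) = (\<Sum>s<n. \<integral>v. max (v s - T) 0 \<partial>PM)"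
      by (rule Bochner_Integration.integral_sum) (simp add: compi)
    also have "\<dots> = R" unfolding R_def by (rule sum.cong) (auto simp: comp)
    finally show ?thesis .
  qed
  finally have main: "T * real (k + l) \<le> R + real (card J) * T" .
  have R0: "0 \<le> R" unfolding R_def a_def
    by (intro sum_nonneg Bochner_Integration.integral_nonneg) auto
  have cJ: "card J \<le> l" using card_mono[OF _ JS] by simp
  have kT: "real k * T \<le> R"
  proof (cases "T \<ge> 0")
    case True
    then have "real (card J) * T \<le> real l * T" using cJ by (intro mult_right_mono) auto
    then show ?thesis using main by (simp add: algebra_simps)
  next
    case False
    then have "real k * T \<le> 0" using k1 by (simp add: mult_nonneg_nonpos)
    then show ?thesis using R0 by linarith
  qed
  have "min T (R / real k) = T" using kT k1 by (simp add: min_def le_divide_eq mult.commute)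
  moreover have "min T (R / real k) \<le> util F (\<sigma>(i := threshold_strategy T)) i 0 n {0..<k}"
    using main_ind[OF assms(1,2,4) k1 assms(8,9), of 0 n "{0..<k}" i T] assms(5)
    by (simp add: R_def a_def atLeast0LessThan)
  ultimately show ?thesis unfolding utility_def T_def by simp
qed

end
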